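(* The series $\mathfrak{f}_2(z)=\sum_{n\ge0}\frac{-1}{2n-1}\binom{2n}{n}^2z^n$ belongs to $\mathcal{L}^2(\mathcal{P}\setminus\{2\})$, where $\mathcal{P}$ is the set of all primes.
   Context: For a prime $p$, $\mathbb{Z}_{(p)}$ is the localization of $\mathbb{Z}$ at $(p)$; for $f=\sum a(n)z^n\in\mathbb{Z}_{(p)}[[z]]$, $f_{|p}(z)=\sum (a(n)\bmod p)z^n$. The height of a rational function $P/Q$ with $P,Q$ coprime polynomials is $\max(\deg P,\deg Q)$. For an infinite set $\mathcal{S}$ of primes, $\mathcal{L}^2(\mathcal{S})$ is the set of $f\in 1+z\mathbb{Q}[[z]]$ such that there is a constant $C>0$ independent of $p$ with: for every $p\in\mathcal{S}$, $f\in\mathbb{Z}_{(p)}[[z]]$, and there exist an integer $l_p>0$ and $A_p\in\mathbb{F}_p(z)\cap\mathbb{F}_p[[z]]$ with $f_{|p}(z)=A_p(z)f_{|p}(z^{p^{l_p}})$ and height of $A_p$ at most $Cp^{2l_p}$. *)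

theory Defs
  imports "HOL-Computational_Algebra.Computational_Algebra" "HOL-Number_Theory.Number_Theory"
    "Berlekamp_Zassenhaus.Poly_Mod"
begin

definition in_Zloc :: "nat \<Rightarrow> rat \<Rightarrow> bool" where
  "in_Zloc p r \<longleftrightarrow> \<not> int p dvd snd (quotient_of r)"

definition red_mod :: "nat \<Rightarrow> rat \<Rightarrow> int" where
  "red_mod p r = (THE k. 0 \<le> k \<and> k < int p \<and>
      [fst (quotient_of r) = k * snd (quotient_of r)] (mod int p))"

text \<open>f_{|p}, as an integer power series with coefficients in {0..p-1} (representing F_p[[z]]).\<close>
definition fps_red :: "nat \<Rightarrow> rat fps \<Rightarrow> int fps" where
  "fps_red p f = Abs_fps (\<lambda>n. red_mod p (fps_nth f n))"

definition fps_subst_pow :: "nat \<Rightarrow> 'a::zero fps \<Rightarrow> 'a fps" where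
  "fps_subst_pow q g = Abs_fps (\<lambda>n. if q dvd n then fps_nth g (n div q) else 0)"

definition fps_eq_mod :: "nat \<Rightarrow> int fps \<Rightarrow> int fps \<Rightarrow> bool" where
  "fps_eq_mod p F G \<longleftrightarrow> (\<forall>n. [fps_nth F n = fps_nth G n] (mod int p))"

text \<open>A rational function A_p in F_p(z) is given as P/Q with P, Q
  integer polynomials read modulo p, coprime over F_p; A_p lies in F_p[[z]] iff Q(0) is
  nonzero mod p; then f_{|p}(z) = A_p(z) f_{|p}(z^{p^l}) means Q f_{|p}(z) = P f_{|p}(z^{p^l})
  in F_p[[z]]; the height is max(deg P, deg Q) over F_p.\<close>
definition L2 :: "nat set \<Rightarrow> rat fps set" where
  "L2 S = {f. fps_nth f 0 = 1 \<and>
     (\<exists>C::real. C > 0 \<and> (\<forall>p\<in>S.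
        (\<forall>n. in_Zloc p (fps_nth f n)) \<and>
        (\<exists>l::nat. l > 0 \<and> (\<exists>P Q :: int poly.
            poly_mod.coprime_m (int p) P Q \<and>
            poly_mod.M (int p) (Polynomial.coeff Q 0) \<noteq> 0 \<and>
            fps_eq_mod p (fps_of_poly Q * fps_red p f)
                         (fps_of_poly P * fps_subst_pow (p ^ l) (fps_red p f)) \<and>
            real (max (degree (poly_mod.Mp (int p) P)) (degree (poly_mod.Mp (int p) Q)))
              \<le> C * real p ^ (2 * l)))))}"

definition frak_f2 :: "rat fps" where
  "frak_f2 = Abs_fps (\<lambda>n. - 1 / (2 * of_nat n - 1) * of_nat ((2 * n) choose n) ^ 2)"

end

theory Submission imports Defs begin


lemma choose_prime_cong:
  assumes p: "prime (p::nat)"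
  shows "[p choose k = (if k = 0 then 1 else if k = p then 1 else 0)] (mod p)"
proof -
  have p0: "p > 0" using p prime_gt_0_nat by blast
  consider "k = 0" | "k = p" | "0 < k \<and> k < p" | "k > p" by linarith
  then show ?thesis
  proof cases
    case 3
    then have "p dvd (p choose k)" using dvd_choose_prime p by auto
    then show ?thesis using 3 by (simp add: cong_0_iff)
  next
    case 4 then show ?thesis by (simp add: binomial_eq_0)
  qed (use p0 in auto)
qed

lemma choose_add_prime_cong:
  assumes p: "prime (p::nat)"
  shows "[(x + p) choose b = (x choose b) + (if p \<le> b then x choose (b - p) else 0)] (mod p)"
proof -
  have p0: "p > 0" using p prime_gt_0_nat by blast
  have "(x + p) choose b = (\<Sum>k\<le>b. (p choose k) * (x choose (b - k)))"
    using vandermonde[of p x b] by (simp add: add.commute)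
  also have "[\<dots> = (\<Sum>k\<le>b. (if k = 0 then 1 else if k = p then 1 else 0) * (x choose (b - k)))] (mod p)"
    by (intro cong_sum cong_mult choose_prime_cong[OF p] cong_refl)
  also have "(\<Sum>k\<le>b. (if k = 0 then 1 else if k = p then 1 else 0) * (x choose (b - k)))
      = (\<Sum>k\<le>b. (if k = 0 then x choose b else 0) + (if k = p then x choose (b - p) else 0))"
    by (intro sum.cong) (use p0 in auto)
  also have "\<dots> = (x choose b) + (if p \<le> b then x choose (b - p) else 0)"
    by (simp add: sum.distrib)
  finally show ?thesis .
qed

lemma lucas:
  assumes p: "prime (p::nat)" and a0: "a0 < p" and b0: "b0 < p"
  shows "[(a0 + p * a1) choose (b0 + p * b1) = (a0 choose b0) * (a1 choose b1)] (mod p)"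
  using b0 a0
proof (induction a1 arbitrary: b1)
  case 0
  then show ?case
  proof (cases b1)
    case (Suc c)
    then have "a0 < b0 + p * b1" using 0 by simp
    then have e1: "(a0 + p * 0) choose (b0 + p * b1) = 0" by (simp add: binomial_eq_0)
    have e2: "(a0 choose b0) * (0 choose b1) = 0" using Suc by simp
    show ?thesis unfolding e1 e2 by (rule cong_refl)
  qed simp
next
  case (Suc a1)
  have eq: "a0 + p * Suc a1 = (a0 + p * a1) + p" by simp
  show ?case
  proof (cases b1)
    case 0
    have "[(a0 + p * Suc a1) choose b0 = ((a0 + p * a1) choose b0) + 0] (mod p)"
      using choose_add_prime_cong[OF p, of "a0 + p*a1" b0] Suc.prems unfolding eq by simp
    also have "[((a0 + p * a1) choose b0) + 0 = (a0 choose b0) * (a1 choose 0)] (mod p)"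
      using Suc.IH[of 0] Suc.prems by simp
    finally show ?thesis using 0 by simp
  next
    case (Suc c)
    have "[(a0 + p * Suc a1) choose (b0 + p * b1) = ((a0 + p * a1) choose (b0 + p*b1))
          + ((a0 + p * a1) choose (b0 + p * c))] (mod p)"
      using choose_add_prime_cong[OF p, of "a0 + p*a1" "b0 + p*b1"] Suc unfolding eq by simp
    also have "[((a0 + p * a1) choose (b0 + p*b1)) + ((a0 + p * a1) choose (b0 + p * c))
       = (a0 choose b0) * (a1 choose b1) + (a0 choose b0) * (a1 choose c)] (mod p)"
      by (intro cong_add Suc.IH) (use Suc.prems in auto)
    also have "(a0 choose b0) * (a1 choose b1) + (a0 choose b0) * (a1 choose c)
       = (a0 choose b0) * (Suc a1 choose b1)"
      using Suc by (simp add: algebra_simps)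
    finally show ?thesis .
  qed
qed

lemma central_lucas:
  assumes p: "prime (p::nat)" and n0: "n0 < p"
  shows "[(2 * (n0 + p * m)) choose (n0 + p * m) =
          (if 2 * n0 < p then ((2*n0) choose n0) * ((2*m) choose m) else 0)] (mod p)"
proof (cases "2 * n0 < p")
  case True
  have "2 * (n0 + p * m) = 2 * n0 + p * (2 * m)" by simp
  then show ?thesis using lucas[OF p True n0, of "2*m" m] True by presburger
next
  case False
  have e: "2 * (n0 + p * m) = (2 * n0 - p) + p * (2 * m + 1)" using False by simp
  have "2 * n0 - p < n0" using False n0 by linarith
  then have z: "(2*n0-p) choose n0 = 0" by (rule binomial_eq_0)
  show ?thesis using lucas[OF p _ n0, of "2*n0-p" "2*m+1" m] False n0 unfolding e z by simp
qed



lemma cat_a1: "Suc k * ((2*k) choose (Suc k)) = k * ((2*k) choose k)"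
proof -
  have "Suc k * ((2*k) choose (Suc k)) = (2*k) * ((2*k - 1) choose k)"
    by (rule binomial_absorption)
  also have "\<dots> = (2*k - k) * ((2*k) choose k)" by (rule binomial_absorb_comp[symmetric])
  finally show ?thesis by simp
qed

lemma cat_a2: "Suc k * ((2*k+2) choose (Suc k)) = 2 * (2*k+1) * ((2*k) choose k)"
proof -
  have "Suc k * ((2*k+2) choose (Suc k)) = Suc k * (Suc (2*k+1) choose (Suc k))" by simp
  also have "\<dots> = Suc (2*k+1) * ((2*k+1) choose k)" by (rule Suc_times_binomial)
  also have "(2*k+1) choose k = (2*k+1) choose (Suc k)"
    using binomial_symmetric[of k "2*k+1"] by simp
  also have "Suc (2*k+1) * ((2*k+1) choose (Suc k)) = 2 * (Suc k * (Suc (2*k) choose Suc k))" by simp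
  also have "Suc k * (Suc (2*k) choose Suc k) = Suc (2*k) * ((2*k) choose k)" by (rule Suc_times_binomial)
  finally show ?thesis by simp
qed

lemma cat_id: "int (2*k+1) * (2 * (int ((2*k) choose k) - int ((2*k) choose (Suc k)))) = int ((2*k+2) choose (Suc k))"
proof -
  have h1: "int (Suc k) * int ((2*k) choose (Suc k)) = int k * int ((2*k) choose k)"
    using cat_a1[of k] by (metis of_nat_mult)
  have h2: "int (Suc k) * int ((2*k+2) choose (Suc k)) = 2 * (2 * int k + 1) * int ((2*k) choose k)"
    using cat_a2[of k] by (metis (mono_tags) of_nat_mult of_nat_numeral of_nat_add of_nat_1 of_nat_mult)
  have "int (Suc k) * (int (2*k+1) * (2 * (int ((2*k) choose k) - int ((2*k) choose (Suc k)))))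
     = 2 * (2 * int k + 1) * (int (Suc k) * int ((2*k) choose k) - int (Suc k) * int ((2*k) choose (Suc k)))"
    by (simp add: algebra_simps)
  also have "\<dots> = 2 * (2 * int k + 1) * int ((2*k) choose k)" unfolding h1 by (simp add: algebra_simps)
  also have "\<dots> = int (Suc k) * int ((2*k+2) choose (Suc k))" using h2 by simp
  finally show ?thesis by simp
qed


definition Aseq :: "nat \<Rightarrow> int" where
  "Aseq n = (if n = 0 then 1 else
     -2 * int ((2*n) choose n) * (int ((2*n-2) choose (n-1)) - int ((2*n-2) choose n)))"

definition bseq :: "nat \<Rightarrow> int" where
  "bseq n = int ((2*n) choose n) ^ 2"

lemma A_Suc: "Aseq (Suc k) = -2 * int ((2*k+2) choose (Suc k)) * (int ((2*k) choose k) - int ((2*k) choose (Suc k)))"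
proof -
  have e: "2 * Suc k - 2 = 2*k" "Suc k - 1 = k" "2 * Suc k = 2*k+2" by auto
  show ?thesis unfolding Aseq_def e by simp
qed

lemma A_rel: "(2 * int n - 1) * Aseq n = - (int ((2*n) choose n) ^ 2)"
proof (cases n)
  case 0 then show ?thesis by (simp add: Aseq_def)
next
  case (Suc k)
  have alg: "\<And>x y d :: int. y * (-2 * x * d) = - x * (y * (2 * d))" by (simp add: algebra_simps)
  have e1: "2 * int n - 1 = int (2*k+1)" using Suc by simp
  have "(2 * int n - 1) * Aseq n =
     - int ((2*k+2) choose (Suc k)) * (int (2*k+1) * (2 * (int ((2*k) choose k) - int ((2*k) choose (Suc k)))))"
    unfolding Suc A_Suc alg by simp
  also have "\<dots> = - (int ((2*k+2) choose (Suc k)) ^ 2)" unfolding cat_id by (simp only: power2_eq_square mult_minus_left)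
  also have "2*k+2 = 2*n" using Suc by simp
  finally show ?thesis using Suc by simp
qed

lemma A_factor: "n > 0 \<Longrightarrow> Aseq n = int ((2*n) choose n) *
     (-2 * (int ((2*n-2) choose (n-1)) - int ((2*n-2) choose n)))"
  by (simp add: Aseq_def algebra_simps)

lemma frak_nth: "fps_nth frak_f2 n = of_int (Aseq n)"
proof -
  have ne: "(2 * of_nat n - 1 :: rat) \<noteq> 0"
  proof
    assume "(2 * of_nat n - 1 :: rat) = 0"
    then have "(of_nat (2*n) :: rat) = of_nat 1" by simp
    then have "2*n = 1" by (simp only: of_nat_eq_iff)
    then show False by simp
  qed
  have "(of_int ((2 * int n - 1) * Aseq n) :: rat) = of_int (- (int ((2*n) choose n) ^ 2))"
    using A_rel by simp
  then have "(2 * of_nat n - 1 :: rat) * of_int (Aseq n) = - (of_nat ((2*n) choose n) ^ 2)"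
    by simp
  then show ?thesis unfolding frak_f2_def using ne
    by (simp add: field_simps)
qed

lemma central_cong_int:
  assumes p: "prime (p::nat)" and n0: "n0 < p"
  shows "[int ((2 * (n0 + p * m)) choose (n0 + p * m)) =
          (if 2 * n0 < p then int ((2*n0) choose n0) * int ((2*m) choose m) else 0)] (mod int p)"
proof -
  have "[int ((2 * (n0 + p * m)) choose (n0 + p * m)) =
          int (if 2 * n0 < p then ((2*n0) choose n0) * ((2*m) choose m) else 0)] (mod int p)"
    using central_lucas[OF p n0, of m] cong_int_iff by blast
  then show ?thesis by (simp split: if_splits)
qed

lemma central_zero:
  assumes p: "prime (p::nat)" and n0: "n0 < p" and big: "\<not> 2 * n0 < p"
  shows "[int ((2 * n0) choose n0) = 0] (mod int p)"
  using central_cong_int[OF p n0, of 0] big by simp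

lemma b_cong:
  assumes p: "prime (p::nat)" and m0: "m0 < p"
  shows "[bseq (m0 + p * k) = bseq m0 * bseq k] (mod int p)"
proof (cases "2 * m0 < p")
  case True
  have "[int ((2 * (m0 + p * k)) choose (m0 + p * k)) ^ 2 =
        (int ((2*m0) choose m0) * int ((2*k) choose k)) ^ 2] (mod int p)"
    using central_cong_int[OF p m0, of k] True by (intro cong_pow) simp
  then show ?thesis unfolding bseq_def by (simp add: power_mult_distrib)
next
  case False
  have "[int ((2 * (m0 + p * k)) choose (m0 + p * k)) ^ 2 = 0 ^ 2] (mod int p)"
    using central_cong_int[OF p m0, of k] False by (intro cong_pow) simp
  moreover have "[int ((2 * m0) choose m0) ^ 2 * bseq k = 0 ^ 2 * bseq k] (mod int p)"
    using central_zero[OF p m0 False] by (intro cong_pow cong_mult cong_refl)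
  ultimately show ?thesis unfolding bseq_def
    by (metis (no_types, lifting) cong_sym cong_trans mult_zero_left power_zero_numeral)
qed

lemma A_cong:
  assumes p: "prime (p::nat)" and p2: "p \<noteq> 2" and n0: "n0 < p"
  shows "[Aseq (n0 + p * m) = Aseq n0 * bseq m] (mod int p)"
proof (cases "2 * n0 < p")
  case True
  define n where "n = n0 + p * m"
  have c: "[int ((2 * n) choose n) = int ((2*n0) choose n0) * int ((2*m) choose m)] (mod int p)"
    using central_cong_int[OF p n0, of m] True unfolding n_def by simp
  have "[(2 * int n0 - 1) * Aseq n = (2 * int n - 1) * Aseq n] (mod int p)"
  proof (intro cong_mult cong_refl)
    have "2 * int n - 1 = (2 * int n0 - 1) + int p * (2 * int m)" unfolding n_def by (simp add: algebra_simps)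
    then show "[2 * int n0 - 1 = 2 * int n - 1] (mod int p)"
      by (metis cong_sym cong_add_lcancel_0 cong_mult_self_left)
  qed
  also have "(2 * int n - 1) * Aseq n = - (int ((2*n) choose n) ^ 2)" by (rule A_rel)
  also have "[- (int ((2*n) choose n) ^ 2) = - ((int ((2*n0) choose n0) * int ((2*m) choose m)) ^ 2)] (mod int p)"
    by (intro cong_minus_minus_iff[THEN iffD2] cong_pow c)
  also have "- ((int ((2*n0) choose n0) * int ((2*m) choose m)) ^ 2) = (2 * int n0 - 1) * (Aseq n0 * bseq m)"
  proof -
    have "(2 * int n0 - 1) * (Aseq n0 * bseq m) = ((2 * int n0 - 1) * Aseq n0) * bseq m"
      by (simp only: mult.assoc)
    also have "\<dots> = - (int ((2*n0) choose n0) ^ 2) * int ((2*m) choose m) ^ 2"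
      unfolding A_rel bseq_def ..
    finally show ?thesis by (simp add: power_mult_distrib)
  qed
  finally have eq: "[(2 * int n0 - 1) * Aseq n = (2 * int n0 - 1) * (Aseq n0 * bseq m)] (mod int p)" .
  have pi: "prime (int p)" using p by simp
  have nz: "2 * int n0 - 1 \<noteq> 0" by presburger
  have ndvd: "\<not> int p dvd (2 * int n0 - 1)"
  proof
    assume "int p dvd (2 * int n0 - 1)"
    from dvd_imp_le_int[OF nz this] have "\<bar>int p\<bar> \<le> \<bar>2 * int n0 - 1\<bar>" .
    then show False using True prime_ge_2_nat[OF p] by (cases "n0 = 0") (auto simp: abs_if)
  qed
  have "algebraic_semidom_class.coprime (2 * int n0 - 1) (int p)"
    using prime_imp_coprime[OF pi ndvd] by (simp add: ac_simps)
  then show ?thesis using eq unfolding n_def by (simp add: cong_mult_lcancel)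
next
  case False
  have p0: "p \<ge> 2" using p prime_ge_2_nat by blast
  then have n0pos: "n0 > 0" using False by linarith
  then have npos: "n0 + p * m > 0" by simp
  have c1: "[int ((2 * (n0 + p*m)) choose (n0 + p*m)) = 0] (mod int p)"
    using central_cong_int[OF p n0, of m] False by simp
  have "[Aseq (n0 + p * m) = 0] (mod int p)"
    unfolding A_factor[OF npos] using cong_mult[OF c1 cong_refl] by simp
  moreover have "[Aseq n0 * bseq m = 0] (mod int p)"
    unfolding A_factor[OF n0pos] using cong_mult[OF cong_mult[OF central_zero[OF p n0 False] cong_refl] cong_refl]
    by simp
  ultimately show ?thesis by (meson cong_sym cong_trans)
qed

lemma fem_refl: "fps_eq_mod p F F"
  unfolding fps_eq_mod_def by simp

lemma fem_sym: "fps_eq_mod p F G \<Longrightarrow> fps_eq_mod p G F"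
  unfolding fps_eq_mod_def by (simp add: cong_sym)

lemma fem_trans: "fps_eq_mod p F G \<Longrightarrow> fps_eq_mod p G H \<Longrightarrow> fps_eq_mod p F H"
  unfolding fps_eq_mod_def by (meson cong_trans)

lemma fem_mult: "fps_eq_mod p F F' \<Longrightarrow> fps_eq_mod p G G' \<Longrightarrow> fps_eq_mod p (F * G) (F' * G')"
  unfolding fps_eq_mod_def fps_mult_nth by (intro allI cong_sum cong_mult) auto

lemma fem_subst: "fps_eq_mod p F G \<Longrightarrow> fps_eq_mod p (fps_subst_pow q F) (fps_subst_pow q G)"
  unfolding fps_eq_mod_def fps_subst_pow_def by (auto intro: cong_refl)

lemma subst_compose:
  fixes g :: "'a::comm_ring_1 fps"
  assumes q: "q > 0"
  shows "fps_subst_pow q g = g oo fps_X ^ q"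
proof (rule fps_ext)
  fix n
  have "(g oo fps_X ^ q) $ n = (\<Sum>i = 0..n. g $ i * (if n = q * i then 1 else 0))"
    unfolding fps_compose_nth by (simp add: power_mult[symmetric])
  also have "\<dots> = (\<Sum>i = 0..n. if i = n div q then (if q dvd n then g $ (n div q) else 0) else 0)"
  proof (intro sum.cong refl)
    fix i assume "i \<in> {0..n}"
    show "g $ i * (if n = q * i then 1 else 0) = (if i = n div q then (if q dvd n then g $ (n div q) else 0) else 0)"
      using q by auto
  qed
  also have "\<dots> = (if q dvd n then g $ (n div q) else 0)"
    by (subst sum.delta) (auto simp: div_le_dividend)
  finally show "fps_subst_pow q g $ n = (g oo fps_X ^ q) $ n"
    unfolding fps_subst_pow_def by simp
qed

lemma subst_mult:
  fixes f g :: "int fps"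
  assumes q: "q > 0"
  shows "fps_subst_pow q (f * g) = fps_subst_pow q f * fps_subst_pow q g"
  unfolding subst_compose[OF q] using q by (intro fps_compose_mult_distrib) simp

lemma subst_subst: "fps_subst_pow q (fps_subst_pow r g) = fps_subst_pow (q * r) g"
proof (rule fps_ext)
  fix n
  show "fps_subst_pow q (fps_subst_pow r g) $ n = fps_subst_pow (q * r) g $ n"
    unfolding fps_subst_pow_def
    by (auto simp: div_mult2_eq mult.commute dvd_div_iff_mult elim!: dvdE)
qed

lemma fps_of_poly_pcompose_monom:
  fixes F :: "int poly"
  assumes q: "q > 0"
  shows "fps_of_poly (pcompose F (Polynomial.monom 1 q)) = fps_subst_pow q (fps_of_poly F)"
  unfolding subst_compose[OF q] using q
  by (subst fps_of_poly_pcompose) (simp_all add: fps_of_poly_monom')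

lemma poly_block_mult:
  fixes c :: "nat \<Rightarrow> int" and G :: "int fps"
  assumes p: "p > 0"
  shows "(fps_of_poly (Poly (map c [0..<p])) * fps_subst_pow p G) $ n = c (n mod p) * G $ (n div p)"
proof -
  have cf: "Polynomial.coeff (Poly (map c [0..<p])) i = (if i < p then c i else 0)" for i
    by (simp add: nth_default_def)
  have "(fps_of_poly (Poly (map c [0..<p])) * fps_subst_pow p G) $ n =
     (\<Sum>i = 0..n. (if i < p then c i else 0) * (if p dvd (n - i) then G $ ((n - i) div p) else 0))"
    unfolding fps_mult_nth fps_subst_pow_def fps_of_poly_nth cf by simp
  also have "\<dots> = (\<Sum>i = 0..n. if i = n mod p then c (n mod p) * G $ (n div p) else 0)"
  proof (intro sum.cong refl)
    fix i assume i: "i \<in> {0..n}"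
    show "(if i < p then c i else 0) * (if p dvd (n - i) then G $ ((n - i) div p) else 0) =
       (if i = n mod p then c (n mod p) * G $ (n div p) else 0)"
    proof (cases "i = n mod p")
      case True
      have "n - i = p * (n div p)" using True by (simp add: minus_mod_eq_mult_div)
      then show ?thesis using True p by simp
    next
      case False
      have "\<not> (i < p \<and> p dvd (n - i))"
      proof
        assume a: "i < p \<and> p dvd (n - i)"
        have "n = (n - i) + i" using i by simp
        then have "n mod p = ((n - i) + i) mod p" by simp
        also have "\<dots> = i mod p" using a by (simp add: mod_add_left_eq[symmetric])
        finally show False using False a by simp
      qed
      then show ?thesis using False by auto
    qed
  qed
  also have "\<dots> = c (n mod p) * G $ (n div p)"
    by (subst sum.delta) (auto simp: mod_le_divisor)
  finally show ?thesis .
qed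

definition Fa :: "int fps" where "Fa = Abs_fps Aseq"
definition Fb :: "int fps" where "Fb = Abs_fps bseq"

lemma Fa_split:
  assumes p: "prime (p::nat)" "p \<noteq> 2"
  shows "fps_eq_mod p Fa (fps_of_poly (Poly (map Aseq [0..<p])) * fps_subst_pow p Fb)"
proof -
  have p0: "p > 0" using p prime_gt_0_nat by blast
  show ?thesis unfolding fps_eq_mod_def poly_block_mult[OF p0]
  proof
    fix n
    have "n = n mod p + p * (n div p)" by simp
    then have "Aseq n = Aseq (n mod p + p * (n div p))" by simp
    then show "[Fa $ n = Aseq (n mod p) * Fb $ (n div p)] (mod int p)"
      unfolding Fa_def Fb_def using A_cong[OF p, of "n mod p" "n div p"] p0 by simp
  qed
qed

lemma Fb_split:
  assumes p: "prime (p::nat)"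
  shows "fps_eq_mod p Fb (fps_of_poly (Poly (map bseq [0..<p])) * fps_subst_pow p Fb)"
proof -
  have p0: "p > 0" using p prime_gt_0_nat by blast
  show ?thesis unfolding fps_eq_mod_def poly_block_mult[OF p0]
  proof
    fix n
    have "n = n mod p + p * (n div p)" by simp
    then have "bseq n = bseq (n mod p + p * (n div p))" by simp
    then show "[Fb $ n = bseq (n mod p) * Fb $ (n div p)] (mod int p)"
      unfolding Fb_def using b_cong[OF p, of "n mod p" "n div p"] p0 by simp
  qed
qed

lemma red_mod_int:
  assumes "p > (1::nat)"
  shows "red_mod p (of_int k) = k mod int p"
proof -
  have q: "quotient_of (of_int k :: rat) = (k, 1)"
    by (simp add: of_int_rat quotient_of_Fract)
  show ?thesis unfolding red_mod_def q
    using assms by (intro the_equality) (auto simp: cong_def)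
qed

lemma in_Zloc_int:
  assumes "p > (1::nat)"
  shows "in_Zloc p (of_int k)"
proof -
  have q: "quotient_of (of_int k :: rat) = (k, 1)"
    by (simp add: of_int_rat quotient_of_Fract)
  show ?thesis unfolding in_Zloc_def q using assms by simp
qed

lemma red_frak:
  assumes "p > (1::nat)"
  shows "fps_eq_mod p (fps_red p frak_f2) Fa"
  unfolding fps_eq_mod_def fps_red_def Fa_def frak_nth red_mod_int[OF assms]
  by (simp add: cong_def)

lemma fem_Mp:
  assumes "poly_mod.Mp (int p) A = poly_mod.Mp (int p) B"
  shows "fps_eq_mod p (fps_of_poly A) (fps_of_poly B)"
  unfolding fps_eq_mod_def fps_of_poly_nth
proof
  fix n
  have "Polynomial.coeff (poly_mod.Mp (int p) A) n = Polynomial.coeff (poly_mod.Mp (int p) B) n"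
    using assms by simp
  then show "[Polynomial.coeff A n = Polynomial.coeff B n] (mod int p)"
    by (simp add: poly_mod.Mp_coeff poly_mod.M_def cong_def)
qed

lemma fem_cancel:
  assumes p: "prime (p::nat)" and h0: "\<not> int p dvd Polynomial.coeff h 0"
    and eq: "fps_eq_mod p (fps_of_poly h * X) (fps_of_poly h * Y)"
  shows "fps_eq_mod p X Y"
  unfolding fps_eq_mod_def
proof
  fix n
  show "[X $ n = Y $ n] (mod int p)"
  proof (induction n rule: less_induct)
    case (less n)
    let ?h = "Polynomial.coeff h"
    have "[(\<Sum>i = 0..n. ?h i * X $ (n - i)) = (\<Sum>i = 0..n. ?h i * Y $ (n - i))] (mod int p)"
      using eq unfolding fps_eq_mod_def fps_mult_nth fps_of_poly_nth by blast
    moreover have split: "\<And>f :: nat \<Rightarrow> int. sum f {0..n} = f 0 + sum f {Suc 0..n}"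
      by (rule sum.atLeast_Suc_atMost) simp
    ultimately have e1: "[?h 0 * X $ n + (\<Sum>i = Suc 0..n. ?h i * X $ (n - i)) =
                ?h 0 * Y $ n + (\<Sum>i = Suc 0..n. ?h i * Y $ (n - i))] (mod int p)"
      by (simp only: split diff_zero)
    have e2: "[(\<Sum>i = Suc 0..n. ?h i * X $ (n - i)) = (\<Sum>i = Suc 0..n. ?h i * Y $ (n - i))] (mod int p)"
    proof (rule cong_sum)
      fix i assume "i \<in> {Suc 0..n}"
      then have "n - i < n" by auto
      then show "[?h i * X $ (n - i) = ?h i * Y $ (n - i)] (mod int p)"
        by (rule cong_mult[OF cong_refl less.IH])
    qed
    have "[?h 0 * X $ n + (\<Sum>i = Suc 0..n. ?h i * Y $ (n - i)) =
           ?h 0 * Y $ n + (\<Sum>i = Suc 0..n. ?h i * Y $ (n - i))] (mod int p)"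
      using cong_trans[OF cong_add[OF cong_refl cong_sym[OF e2]] e1] by simp
    then have e3: "[?h 0 * X $ n = ?h 0 * Y $ n] (mod int p)"
      by (simp add: cong_add_rcancel)
    have pi: "prime (int p)" using p by simp
    have "algebraic_semidom_class.coprime (?h 0) (int p)"
      using prime_imp_coprime[OF pi h0] by (simp add: ac_simps)
    then show ?case using e3 by (simp add: cong_mult_lcancel)
  qed
qed

lemma coprime_small:
  assumes p: "prime (p::nat)" and c: "0 < c" "c < int p"
  shows "algebraic_semidom_class.coprime c (int p)"
proof -
  have ndvd: "\<not> int p dvd c"
  proof
    assume "int p dvd c"
    from zdvd_imp_le[OF this] have "int p \<le> c" using c by linarith
    then show False using c by linarith
  qed
  have pi: "prime (int p)" using p by simp
  have "algebraic_semidom_class.coprime (int p) c" by (rule prime_imp_coprime[OF pi ndvd])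
  then show ?thesis by (simp add: ac_simps)
qed

lemma unit_dvdm:
  assumes p: "prime (p::nat)"
    and d: "degree (poly_mod.Mp (int p) h) = 0"
    and c: "poly_mod.M (int p) (Polynomial.coeff h 0) \<noteq> 0"
  shows "poly_mod.dvdm (int p) h 1"
proof -
  interpret poly_mod_prime "int p" by unfold_locales (use p in simp)
  define c where "c = M (Polynomial.coeff h 0)"
  have hc: "Mp h = [:c:]"
    using d unfolding c_def by (metis Mp_coeff degree_0_id)
  have c0: "c \<noteq> 0" using assms(3) unfolding c_def by simp
  have cb: "0 \<le> c" "c < int p" unfolding c_def M_def using p prime_gt_0_nat by auto
  have cop: "algebraic_semidom_class.coprime c (int p)" using coprime_small[OF p] c0 cb by simp
  define d where "d = inverse_mod c (int p)"
  have cop2: "comm_monoid_mult_class.coprime c (int p)"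
    by (rule comm_monoid_mult_class.coprimeI) (use cop coprime_common_divisor in blast)
  have cd: "M (d * c) = 1" unfolding d_def by (rule inverse_mod_coprime[OF prime cop2])
  show ?thesis unfolding dvdm_def
  proof (intro exI[of _ "[:d:]"])
    have "Mp (h * [: d :]) = Mp (Mp h * [: d :])" by simp
    also have "Mp h * [: d :] = [: d * c :]" unfolding hc by (simp add: mult.commute)
    also have "Mp ([: d * c :]) = [: M (d * c) :]" by (simp only: Mp_const_poly M_def)
    also have "\<dots> = 1" unfolding cd by simp
    finally have e: "Mp (h * [:d:]) = 1" .
    have "Mp 1 = [: M 1 :]" unfolding one_pCons by (simp only: Mp_const_poly M_def)
    also have "M 1 = 1" unfolding M_def using m1 by simp
    finally show "Mp 1 = Mp (h * [:d:])" unfolding e by simp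
  qed
qed

lemma reduce_coprime:
  fixes F G :: "int fps"
  assumes p: "prime (p::nat)"
  shows "poly_mod.M (int p) (Polynomial.coeff Q0 0) \<noteq> 0 \<Longrightarrow>
     fps_eq_mod p (fps_of_poly Q0 * F) (fps_of_poly P0 * G) \<Longrightarrow>
     \<exists>P Q. poly_mod.coprime_m (int p) P Q \<and>
       poly_mod.M (int p) (Polynomial.coeff Q 0) \<noteq> 0 \<and>
       fps_eq_mod p (fps_of_poly Q * F) (fps_of_poly P * G) \<and>
       degree (poly_mod.Mp (int p) P) + degree (poly_mod.Mp (int p) Q) \<le>
       degree (poly_mod.Mp (int p) P0) + degree (poly_mod.Mp (int p) Q0)"
proof (induction "degree (poly_mod.Mp (int p) P0) + degree (poly_mod.Mp (int p) Q0)"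
         arbitrary: P0 Q0 rule: less_induct)
  case less
  interpret poly_mod_prime "int p" by unfold_locales (use p in simp)
  show ?case
  proof (cases "coprime_m P0 Q0")
    case True
    then show ?thesis using less.prems by blast
  next
    case False
    then obtain h where hP: "h dvdm P0" and hQ: "h dvdm Q0" and hn: "\<not> h dvdm 1"
      unfolding coprime_m_def by blast
    from hQ obtain Q' where Q': "Mp Q0 = Mp (h * Q')" unfolding dvdm_def by blast
    from hP obtain P'' where P'': "Mp P0 = Mp (h * P'')" unfolding dvdm_def by blast
    have "Polynomial.coeff (Mp Q0) 0 = Polynomial.coeff (Mp (h * Q')) 0" using Q' by simp
    then have c0: "M (Polynomial.coeff Q0 0) = M (Polynomial.coeff h 0 * Polynomial.coeff Q' 0)"
      by (simp add: Mp_coeff coeff_mult_0)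
    have pr: "\<not> int p dvd (Polynomial.coeff h 0 * Polynomial.coeff Q' 0)"
      using c0 less.prems(1) unfolding M_def by (simp add: dvd_eq_mod_eq_0)
    have hnd: "\<not> int p dvd Polynomial.coeff h 0"
      using pr by (meson dvd_mult2)
    have Qnd: "\<not> int p dvd Polynomial.coeff Q' 0"
      using pr by (meson dvd_mult)
    have hc0: "M (Polynomial.coeff h 0) \<noteq> 0"
      using hnd unfolding M_def by (simp add: dvd_eq_mod_eq_0)
    have Qc0: "M (Polynomial.coeff Q' 0) \<noteq> 0"
      using Qnd unfolding M_def by (simp add: dvd_eq_mod_eq_0)
    have MQ0: "Mp Q0 \<noteq> 0"
    proof
      assume "Mp Q0 = 0"
      then have "Polynomial.coeff (Mp Q0) 0 = 0" by simp
      then show False using less.prems(1) by (simp add: Mp_coeff)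
    qed
    have degQ: "degree (Mp Q0) = degree (Mp h) + degree (Mp Q')"
      using degree_m_eq_prime[of "Mp Q0" h Q'] MQ0 Q' prime by simp
    have hpos: "degree (Mp h) > 0"
    proof (rule ccontr)
      assume "\<not> degree (Mp h) > 0"
      then have "degree (Mp h) = 0" by simp
      from unit_dvdm[OF p this hc0] hn show False by simp
    qed
    obtain P' where P': "Mp P0 = Mp (h * P')" and degP: "degree (Mp P') \<le> degree (Mp P0)"
    proof (cases "Mp P0 = 0")
      case True
      then show ?thesis using that[of 0] by simp
    next
      case False
      have "degree (Mp P0) = degree (Mp h) + degree (Mp P'')"
        using degree_m_eq_prime[of "Mp P0" h P''] False P'' prime by simp
      then show ?thesis using that[of P''] P'' by simp
    qed
    have "fps_eq_mod p (fps_of_poly h * (fps_of_poly Q' * F)) (fps_of_poly h * (fps_of_poly P' * G))"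
    proof -
      have "fps_eq_mod p (fps_of_poly (h * Q') * F) (fps_of_poly Q0 * F)"
        by (intro fem_mult fem_refl fem_Mp) (use Q' in simp)
      moreover have "fps_eq_mod p (fps_of_poly P0 * G) (fps_of_poly (h * P') * G)"
        by (intro fem_mult fem_refl fem_Mp) (use P' in simp)
      ultimately have "fps_eq_mod p (fps_of_poly (h * Q') * F) (fps_of_poly (h * P') * G)"
        using less.prems(2) by (meson fem_trans)
      then show ?thesis by (simp add: fps_of_poly_mult mult.assoc)
    qed
    then have eqn: "fps_eq_mod p (fps_of_poly Q' * F) (fps_of_poly P' * G)"
      by (rule fem_cancel[OF p hnd])
    have lt: "degree (Mp P') + degree (Mp Q') < degree (Mp P0) + degree (Mp Q0)"
      using degQ hpos degP by simp
    from less.hyps[OF lt Qc0 eqn] obtain P Q where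
      r: "coprime_m P Q" "M (Polynomial.coeff Q 0) \<noteq> 0"
         "fps_eq_mod p (fps_of_poly Q * F) (fps_of_poly P * G)"
         "degree (Mp P) + degree (Mp Q) \<le> degree (Mp P') + degree (Mp Q')" by blast
    then show ?thesis using lt by (intro exI[of _ P] exI[of _ Q]) auto
  qed
qed

lemma subst_nth0: "fps_subst_pow q g $ 0 = g $ 0"
  unfolding fps_subst_pow_def by simp

lemma deg_block: "degree (Poly (map (c :: nat \<Rightarrow> int) [0..<p])) \<le> p - 1"
  by (rule degree_le) (auto simp: nth_default_def)

lemma deg_pc:
  assumes "p > 0"
  shows "degree (pcompose (F :: int poly) (Polynomial.monom 1 p)) \<le> degree F * p"
  using degree_pcompose_le[of F "Polynomial.monom 1 p"] by (simp add: degree_monom_eq)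

lemma arith_bound:
  assumes "p > (0::nat)" "a \<le> p - 1 + (p - 1) * p" "b \<le> (p - 1) * p"
  shows "a + b \<le> 2 * p ^ 2"
proof -
  obtain k where k: "p = Suc k" using assms(1) by (cases p) auto
  have "p - 1 + (p - 1) * p + (p - 1) * p \<le> 2 * p ^ 2"
    unfolding k by (simp add: algebra_simps power2_eq_square)
  then show ?thesis using assms by linarith
qed

lemma per_prime:
  assumes p: "prime (p::nat)" and p2: "p \<noteq> 2"
  shows "\<exists>P Q :: int poly.
            poly_mod.coprime_m (int p) P Q \<and>
            poly_mod.M (int p) (Polynomial.coeff Q 0) \<noteq> 0 \<and>
            fps_eq_mod p (fps_of_poly Q * fps_red p frak_f2)
                         (fps_of_poly P * fps_subst_pow (p ^ 1) (fps_red p frak_f2)) \<and>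
            real (max (degree (poly_mod.Mp (int p) P)) (degree (poly_mod.Mp (int p) Q)))
              \<le> 2 * real p ^ (2 * 1)"
proof -
  have p0: "p > 0" using p prime_gt_0_nat by blast
  have p1: "p > 1" using p prime_gt_1_nat by blast
  define F0 where "F0 = Poly (map Aseq [0..<p])"
  define B0 where "B0 = Poly (map bseq [0..<p])"
  define F0p where "F0p = pcompose F0 (Polynomial.monom 1 p)"
  define B0p where "B0p = pcompose B0 (Polynomial.monom 1 p)"
  define R where "R = fps_red p frak_f2"
  let ?S = "fps_subst_pow p"
  have fF0p: "fps_of_poly F0p = ?S (fps_of_poly F0)"
    unfolding F0p_def by (rule fps_of_poly_pcompose_monom[OF p0])
  have fB0p: "fps_of_poly B0p = ?S (fps_of_poly B0)"
    unfolding B0p_def by (rule fps_of_poly_pcompose_monom[OF p0])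
  have SFb: "fps_eq_mod p (?S Fb) (fps_of_poly B0p * ?S (?S Fb))"
  proof -
    have "fps_eq_mod p (?S Fb) (?S (fps_of_poly B0 * ?S Fb))"
      unfolding B0_def by (rule fem_subst[OF Fb_split[OF p]])
    also have "?S (fps_of_poly B0 * ?S Fb) = fps_of_poly B0p * ?S (?S Fb)"
      unfolding fB0p by (rule subst_mult[OF p0])
    finally show ?thesis .
  qed
  have c1: "fps_eq_mod p (fps_of_poly F0p * R) (fps_of_poly F0p * (fps_of_poly F0 * (fps_of_poly B0p * ?S (?S Fb))))"
  proof -
    have a: "fps_eq_mod p (fps_of_poly F0p * R) (fps_of_poly F0p * Fa)"
      unfolding R_def by (intro fem_mult fem_refl red_frak p1)
    have b: "fps_eq_mod p Fa (fps_of_poly F0 * ?S Fb)"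
      unfolding F0_def by (rule Fa_split[OF p p2])
    have c: "fps_eq_mod p (fps_of_poly F0 * ?S Fb) (fps_of_poly F0 * (fps_of_poly B0p * ?S (?S Fb)))"
      by (intro fem_mult fem_refl SFb)
    show ?thesis using a fem_mult[OF fem_refl fem_trans[OF b c]] fem_trans by blast
  qed
  have c2: "fps_eq_mod p (fps_of_poly (F0 * B0p) * ?S R) (fps_of_poly (F0 * B0p) * (fps_of_poly F0p * ?S (?S Fb)))"
  proof -
    have a: "fps_eq_mod p (?S R) (?S Fa)"
      unfolding R_def by (intro fem_subst red_frak p1)
    have b: "fps_eq_mod p (?S Fa) (?S (fps_of_poly F0 * ?S Fb))"
      unfolding F0_def by (intro fem_subst Fa_split[OF p p2])
    have e: "?S (fps_of_poly F0 * ?S Fb) = fps_of_poly F0p * ?S (?S Fb)"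
      unfolding fF0p by (rule subst_mult[OF p0])
    show ?thesis using fem_mult[OF fem_refl fem_trans[OF a b]] unfolding e .
  qed
  have eqX: "fps_of_poly F0p * (fps_of_poly F0 * (fps_of_poly B0p * ?S (?S Fb))) =
             fps_of_poly (F0 * B0p) * (fps_of_poly F0p * ?S (?S Fb))"
    by (simp add: fps_of_poly_mult mult_ac)
  have cong: "fps_eq_mod p (fps_of_poly F0p * R) (fps_of_poly (F0 * B0p) * ?S R)"
    using fem_trans[OF c1[unfolded eqX] fem_sym[OF c2]] .
  have q0: "Polynomial.coeff F0p 0 = 1"
  proof -
    have "Polynomial.coeff F0p 0 = fps_of_poly F0p $ 0" by simp
    also have "\<dots> = Polynomial.coeff F0 0" unfolding fF0p subst_nth0 by simp
    also have "\<dots> = 1" unfolding F0_def using p0 by (simp add: nth_default_def Aseq_def)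
    finally show ?thesis .
  qed
  have M1: "poly_mod.M (int p) (Polynomial.coeff F0p 0) \<noteq> 0"
    unfolding q0 poly_mod.M_def using p1 by simp
  obtain P Q where r: "poly_mod.coprime_m (int p) P Q" "poly_mod.M (int p) (Polynomial.coeff Q 0) \<noteq> 0"
    "fps_eq_mod p (fps_of_poly Q * R) (fps_of_poly P * ?S R)"
    "degree (poly_mod.Mp (int p) P) + degree (poly_mod.Mp (int p) Q) \<le>
       degree (poly_mod.Mp (int p) (F0 * B0p)) + degree (poly_mod.Mp (int p) F0p)"
    using reduce_coprime[OF p M1 cong] by blast
  have dF0: "degree F0 \<le> p - 1" unfolding F0_def by (rule deg_block)
  have dB0: "degree B0 \<le> p - 1" unfolding B0_def by (rule deg_block)
  have dF0p: "degree F0p \<le> (p - 1) * p"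
    using deg_pc[OF p0, of F0] dF0 unfolding F0p_def by (meson le_trans mult_le_mono1)
  have dB0p: "degree B0p \<le> (p - 1) * p"
    using deg_pc[OF p0, of B0] dB0 unfolding B0p_def by (meson le_trans mult_le_mono1)
  have dP0: "degree (F0 * B0p) \<le> p - 1 + (p - 1) * p"
    using degree_mult_le[of F0 B0p] dF0 dB0p by linarith
  have "degree (poly_mod.Mp (int p) (F0 * B0p)) \<le> p - 1 + (p - 1) * p"
    using poly_mod.degree_m_le[of "int p" "F0 * B0p"] dP0 by linarith
  moreover have "degree (poly_mod.Mp (int p) F0p) \<le> (p - 1) * p"
    using poly_mod.degree_m_le[of "int p" F0p] dF0p by linarith
  ultimately have "degree (poly_mod.Mp (int p) (F0 * B0p)) + degree (poly_mod.Mp (int p) F0p) \<le> 2 * p ^ 2"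
    by (rule arith_bound[OF p0])
  then have "max (degree (poly_mod.Mp (int p) P)) (degree (poly_mod.Mp (int p) Q)) \<le> 2 * p ^ 2"
    using r(4) by linarith
  then have "real (max (degree (poly_mod.Mp (int p) P)) (degree (poly_mod.Mp (int p) Q))) \<le> real (2 * p ^ 2)"
    by (simp only: of_nat_le_iff)
  then have deg: "real (max (degree (poly_mod.Mp (int p) P)) (degree (poly_mod.Mp (int p) Q))) \<le> 2 * real p ^ (2 * 1)"
    by simp
  show ?thesis using r(1,2,3) deg unfolding R_def by (intro exI[of _ P] exI[of _ Q]) simp
qed

theorem mainTheorem18:
  shows "frak_f2 \<in> L2 ({p. prime p} - {2})"
proof -
  have A: "fps_nth frak_f2 0 = 1" by (simp add: frak_nth Aseq_def)
  have B: "\<forall>p\<in>{p. prime p} - {2}. (\<forall>n. in_Zloc p (fps_nth frak_f2 n)) \<and>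
        (\<exists>l::nat. l > 0 \<and> (\<exists>P Q :: int poly.
            poly_mod.coprime_m (int p) P Q \<and>
            poly_mod.M (int p) (Polynomial.coeff Q 0) \<noteq> 0 \<and>
            fps_eq_mod p (fps_of_poly Q * fps_red p frak_f2)
                         (fps_of_poly P * fps_subst_pow (p ^ l) (fps_red p frak_f2)) \<and>
            real (max (degree (poly_mod.Mp (int p) P)) (degree (poly_mod.Mp (int p) Q)))
              \<le> 2 * real p ^ (2 * l)))"
  proof
    fix p :: nat assume "p \<in> {p. prime p} - {2}"
    then have p: "prime p" and p2: "p \<noteq> 2" by auto
    have p1: "p > 1" using p prime_gt_1_nat by blast
    have C1: "\<forall>n. in_Zloc p (fps_nth frak_f2 n)"
      unfolding frak_nth using in_Zloc_int[OF p1] by blast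
    have C2: "\<exists>l::nat. l > 0 \<and> (\<exists>P Q :: int poly.
            poly_mod.coprime_m (int p) P Q \<and>
            poly_mod.M (int p) (Polynomial.coeff Q 0) \<noteq> 0 \<and>
            fps_eq_mod p (fps_of_poly Q * fps_red p frak_f2)
                         (fps_of_poly P * fps_subst_pow (p ^ l) (fps_red p frak_f2)) \<and>
            real (max (degree (poly_mod.Mp (int p) P)) (degree (poly_mod.Mp (int p) Q)))
              \<le> 2 * real p ^ (2 * l))"
      by (rule exI[of _ "1::nat"], rule conjI[OF _ per_prime[OF p p2]]) simp
    show "(\<forall>n. in_Zloc p (fps_nth frak_f2 n)) \<and> (\<exists>l::nat. l > 0 \<and> (\<exists>P Q :: int poly.
            poly_mod.coprime_m (int p) P Q \<and>
            poly_mod.M (int p) (Polynomial.coeff Q 0) \<noteq> 0 \<and>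
            fps_eq_mod p (fps_of_poly Q * fps_red p frak_f2)
                         (fps_of_poly P * fps_subst_pow (p ^ l) (fps_red p frak_f2)) \<and>
            real (max (degree (poly_mod.Mp (int p) P)) (degree (poly_mod.Mp (int p) Q)))
              \<le> 2 * real p ^ (2 * l)))"
      using C1 C2 by (rule conjI)
  qed
  have two: "(2::real) > 0" by simp
  have "\<exists>C::real. C > 0 \<and> (\<forall>p\<in>{p. prime p} - {2}. (\<forall>n. in_Zloc p (fps_nth frak_f2 n)) \<and>
        (\<exists>l::nat. l > 0 \<and> (\<exists>P Q :: int poly.
            poly_mod.coprime_m (int p) P Q \<and>
            poly_mod.M (int p) (Polynomial.coeff Q 0) \<noteq> 0 \<and>
            fps_eq_mod p (fps_of_poly Q * fps_red p frak_f2)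
                         (fps_of_poly P * fps_subst_pow (p ^ l) (fps_red p frak_f2)) \<and>
            real (max (degree (poly_mod.Mp (int p) P)) (degree (poly_mod.Mp (int p) Q)))
              \<le> C * real p ^ (2 * l))))"
    using two B by blast
  then show ?thesis unfolding L2_def mem_Collect_eq using A by blast
qed
end
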